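(* Let $w, t \in \mathbb{Z}$ be such that $2w + t$ is a multiple of $4$. Then there exists a morphism $f \in \mathbb{ROT}\mathrm{ang}(\uparrow, \uparrow)$ such that $W(f) = w$ and $T(f) = t$, and such that $f$, viewed as a tangle, is related to the identity (a single straight strand) by a general isotopy, i.e.\ by planar isotopies and Reidemeister moves of types I, II and III.
   Context: $\mathbb{ROT}\mathrm{ang}$ is the free (strict) braided pivotal category generated by one object $\uparrow$, whose adjoint (left and right adjoints coincide) is denoted $\downarrow$; by Freyd–Yetter, its morphisms are oriented tangles up to regular isotopy (isotopy generated by planar isotopies and Reidemeister moves II and III, but not Reidemeister I). Strands are oriented according to whether they are labelled $\uparrow$ or $\downarrow$. The structural morphisms are four oriented caps/cups: $\mathrm{cap}_r : I \to \uparrow \otimes \downarrow$, $\mathrm{cap}_l : I \to \downarrow \otimes \uparrow$, $\mathrm{cup}_r : \downarrow \otimes \uparrow \to I$, $\mathrm{cup}_l : \uparrow \otimes \downarrow \to I$, satisfying all four yanking (zig-zag) equations. The writhe $W(f)$ of a morphism $f$ is the sum over all crossings (braidings) in its diagram of the sign of the crossing, where the braiding $\sigma$ between two strands of the same orientation counts $+1$ and its inverse $\sigma^{-1}$ counts $-1$ (the standard crossing sign of an oriented crossing). The turning number $T(f)$ is the sum over caps and cups in the diagram of their local turning numbers: $T(\mathrm{cap}_r) = +1$, $T(\mathrm{cap}_l) = -1$, $T(\mathrm{cup}_r) = -1$, $T(\mathrm{cup}_l) = +1$. Both $W$ and $T$ are invariant under the axioms of $\mathbb{ROT}\mathrm{ang}$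 and additive under composition. *)

theory Defs
  imports Main
begin

text \<open>Objects of ROTang are words in the two orientations (Up = the generating
object, Dn = its dual).\<close>

datatype ori = Up | Dn

text \<open>Cross True a c  is the braiding sigma_{a,c} : a c -> c a;
  Cross False a c is the inverse braiding sigma_{c,a}^{-1} : a c -> c a.
  Seq f g means "first f, then g" (i.e. g composed after f).\<close>

datatype diag =
    Id "ori list"
  | Cross bool ori ori
  | CapR | CapL | CupR | CupL
  | Seq diag diag
  | Tens diag diag

fun dom :: "diag \<Rightarrow> ori list" and cod :: "diag \<Rightarrow> ori list" where
  "dom (Id A) = A"
| "dom (Cross s a c) = [a, c]"
| "dom CapR = []"
| "dom CapL = []"
| "dom CupR = [Dn, Up]"
| "dom CupL = [Up, Dn]"
| "dom (Seq f g) = dom f"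
| "dom (Tens f g) = dom f @ dom g"
| "cod (Id A) = A"
| "cod (Cross s a c) = [c, a]"
| "cod CapR = [Up, Dn]"
| "cod CapL = [Dn, Up]"
| "cod CupR = []"
| "cod CupL = []"
| "cod (Seq f g) = cod g"
| "cod (Tens f g) = cod f @ cod g"

fun wf :: "diag \<Rightarrow> bool" where
  "wf (Seq f g) = (wf f \<and> wf g \<and> cod f = dom g)"
| "wf (Tens f g) = (wf f \<and> wf g)"
| "wf _ = True"

definition dtyp :: "diag \<Rightarrow> ori list \<Rightarrow> ori list \<Rightarrow> bool" where
  "dtyp f A B \<longleftrightarrow> wf f \<and> dom f = A \<and> cod f = B"

text \<open>Structural braidings of a word with a single letter (determined by the
hexagon axioms in the strict setting).  For s = True these are the braidings
sigma_{B,c} and sigma_{c,B}; for s = False the corresponding inverse braidings.\<close>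

fun bl :: "bool \<Rightarrow> ori list \<Rightarrow> ori \<Rightarrow> diag" where  
  "bl s [] c = Id [c]"
| "bl s (b # B) c = Seq (Tens (Id [b]) (bl s B c)) (Tens (Cross s b c) (Id B))"

fun br :: "bool \<Rightarrow> ori \<Rightarrow> ori list \<Rightarrow> diag" where  
  "br s c [] = Id [c]"
| "br s c (b # B) = Seq (Tens (Cross s c b) (Id B)) (Tens (Id [b]) (br s c B))"

text \<open>The isotopy relation, typed by source and target.  With gen = False it is
regular isotopy (the axioms of ROTang); with gen = True the Reidemeister I moves
are added (general isotopy).\<close>

inductive tangle_eq :: "bool \<Rightarrow> ori list \<Rightarrow> ori list \<Rightarrow> diag \<Rightarrow> diag \<Rightarrow> bool" where
  refl: "dtyp f A B \<Longrightarrow> tangle_eq gen A B f f"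
| sym: "tangle_eq gen A B f g \<Longrightarrow> tangle_eq gen A B g f"
| trans: "tangle_eq gen A B f g \<Longrightarrow> tangle_eq gen A B g h \<Longrightarrow> tangle_eq gen A B f h"
| seq_cong: "tangle_eq gen A B f f' \<Longrightarrow> tangle_eq gen B C g g' \<Longrightarrow>
    tangle_eq gen A C (Seq f g) (Seq f' g')"
| tens_cong: "tangle_eq gen A B f f' \<Longrightarrow> tangle_eq gen C D g g' \<Longrightarrow>
    tangle_eq gen (A @ C) (B @ D) (Tens f g) (Tens f' g')"
| seq_assoc: "dtyp f A B \<Longrightarrow> dtyp g B C \<Longrightarrow> dtyp h C D \<Longrightarrow>
    tangle_eq gen A D (Seq (Seq f g) h) (Seq f (Seq g h))"
| id_left: "dtyp f A B \<Longrightarrow> tangle_eq gen A B (Seq (Id A) f) f"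
| id_right: "dtyp f A B \<Longrightarrow> tangle_eq gen A B (Seq f (Id B)) f"
| tens_assoc: "dtyp f A B \<Longrightarrow> dtyp g C D \<Longrightarrow> dtyp h E F \<Longrightarrow>
    tangle_eq gen (A @ C @ E) (B @ D @ F) (Tens (Tens f g) h) (Tens f (Tens g h))"
| unit_left: "dtyp f A B \<Longrightarrow> tangle_eq gen A B (Tens (Id []) f) f"
| unit_right: "dtyp f A B \<Longrightarrow> tangle_eq gen A B (Tens f (Id [])) f"
| tens_id: "tangle_eq gen (A @ B) (A @ B) (Tens (Id A) (Id B)) (Id (A @ B))"
| interchange: "dtyp f A B \<Longrightarrow> dtyp g B C \<Longrightarrow> dtyp f' A' B' \<Longrightarrow> dtyp g' B' C' \<Longrightarrow>
    tangle_eq gen (A @ A') (C @ C') (Tens (Seq f g) (Seq f' g')) (Seq (Tens f f') (Tens g g'))"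
| braid_inv1: "tangle_eq gen [a, c] [a, c] (Seq (Cross True a c) (Cross False c a)) (Id [a, c])"
| braid_inv2: "tangle_eq gen [a, c] [a, c] (Seq (Cross False a c) (Cross True c a)) (Id [a, c])"
| nat_left: "dtyp f A B \<Longrightarrow>
    tangle_eq gen (A @ [c]) (c # B) (Seq (Tens f (Id [c])) (bl s B c)) (Seq (bl s A c) (Tens (Id [c]) f))"
| nat_right: "dtyp f A B \<Longrightarrow>
    tangle_eq gen (c # A) (B @ [c]) (Seq (Tens (Id [c]) f) (br s c B)) (Seq (br s c A) (Tens f (Id [c])))"
| yank1: "tangle_eq gen [Up] [Up] (Seq (Tens (Id [Up]) CapL) (Tens CupL (Id [Up]))) (Id [Up])"
| yank2: "tangle_eq gen [Up] [Up] (Seq (Tens CapR (Id [Up])) (Tens (Id [Up]) CupR)) (Id [Up])"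
| yank3: "tangle_eq gen [Dn] [Dn] (Seq (Tens (Id [Dn]) CapR) (Tens CupR (Id [Dn]))) (Id [Dn])"
| yank4: "tangle_eq gen [Dn] [Dn] (Seq (Tens CapL (Id [Dn])) (Tens (Id [Dn]) CupL)) (Id [Dn])"
| r1_right: "tangle_eq True [Up] [Up]
    (Seq (Tens (Id [Up]) CapR) (Seq (Tens (Cross s Up Up) (Id [Dn])) (Tens (Id [Up]) CupL))) (Id [Up])"
| r1_left: "tangle_eq True [Up] [Up]
    (Seq (Tens CapL (Id [Up])) (Seq (Tens (Id [Dn]) (Cross s Up Up)) (Tens CupR (Id [Up])))) (Id [Up])"

text \<open>Writhe: sum of crossing signs.  sigma counts +1 and sigma^{-1} counts -1
when both strands have the same orientation; reversing one strand flips the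
sign (standard oriented crossing sign).\<close>

fun writhe :: "diag \<Rightarrow> int" where
  "writhe (Cross s a c) = (if s then 1 else -1) * (if a = c then 1 else -1)"
| "writhe (Seq f g) = writhe f + writhe g"
| "writhe (Tens f g) = writhe f + writhe g"
| "writhe _ = 0"

fun turning :: "diag \<Rightarrow> int" where
  "turning CapR = 1"
| "turning CapL = -1"
| "turning CupR = -1"
| "turning CupL = 1"
| "turning (Seq f g) = turning f + turning g"
| "turning (Tens f g) = turning f + turning g"
| "turning _ = 0"

end

theory Submission
  imports Defs
begin

definition curlR :: "bool \<Rightarrow> diag" where
  "curlR s = Seq (Tens (Id [Up]) CapR) (Seq (Tens (Cross s Up Up) (Id [Dn])) (Tens (Id [Up]) CupL))"

definition curlL :: "bool \<Rightarrow> diag" where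
  "curlL s = Seq (Tens CapL (Id [Up])) (Seq (Tens (Id [Dn]) (Cross s Up Up)) (Tens CupR (Id [Up])))"

fun iter :: "diag \<Rightarrow> nat \<Rightarrow> diag" where
  "iter g 0 = Id [Up]"
| "iter g (Suc n) = Seq g (iter g n)"

lemma curlR_props: "dtyp (curlR s) [Up] [Up] \<and> writhe (curlR s) = (if s then 1 else -1)
  \<and> turning (curlR s) = 2 \<and> tangle_eq True [Up] [Up] (curlR s) (Id [Up])"
  unfolding curlR_def using tangle_eq.r1_right by (simp add: dtyp_def)

lemma curlL_props: "dtyp (curlL s) [Up] [Up] \<and> writhe (curlL s) = (if s then 1 else -1)
  \<and> turning (curlL s) = -2 \<and> tangle_eq True [Up] [Up] (curlL s) (Id [Up])"
  unfolding curlL_def using tangle_eq.r1_left by (simp add: dtyp_def)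

lemma seq_id:
  assumes "tangle_eq True [Up] [Up] f (Id [Up])" "tangle_eq True [Up] [Up] g (Id [Up])"
  shows "tangle_eq True [Up] [Up] (Seq f g) (Id [Up])"
proof -
  have "tangle_eq True [Up] [Up] (Seq f g) (Seq (Id [Up]) (Id [Up]))"
    using assms by (rule tangle_eq.seq_cong)
  moreover have "tangle_eq True [Up] [Up] (Seq (Id [Up]) (Id [Up])) (Id [Up])"
    by (rule tangle_eq.id_left) (simp add: dtyp_def)
  ultimately show ?thesis by (rule tangle_eq.trans)
qed

lemma iter_props:
  assumes "dtyp g [Up] [Up]" "tangle_eq True [Up] [Up] g (Id [Up])"
  shows "dtyp (iter g n) [Up] [Up] \<and> writhe (iter g n) = int n * writhe g
    \<and> turning (iter g n) = int n * turning g \<and> tangle_eq True [Up] [Up] (iter g n) (Id [Up])"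
proof (induction n)
  case 0
  then show ?case by (auto simp: dtyp_def intro: tangle_eq.refl)
next
  case (Suc n)
  then show ?case using assms seq_id by (auto simp: dtyp_def algebra_simps)
qed

lemma four_props:
  assumes "dtyp a [Up] [Up]" "tangle_eq True [Up] [Up] a (Id [Up])"
    "dtyp b [Up] [Up]" "tangle_eq True [Up] [Up] b (Id [Up])"
    "dtyp c [Up] [Up]" "tangle_eq True [Up] [Up] c (Id [Up])"
    "dtyp d [Up] [Up]" "tangle_eq True [Up] [Up] d (Id [Up])"
  shows "dtyp (Seq a (Seq b (Seq c d))) [Up] [Up] \<and> tangle_eq True [Up] [Up] (Seq a (Seq b (Seq c d))) (Id [Up])"
  using assms seq_id by (auto simp: dtyp_def)

theorem mainTheorem1:
  fixes w t :: int
  assumes "4 dvd (2 * w + t)"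
  shows "\<exists>f. dtyp f [Up] [Up] \<and> writhe f = w \<and> turning f = t \<and>
           tangle_eq True [Up] [Up] f (Id [Up])"
proof -
  obtain m where m: "2 * w + t = 4 * m" using assms by (auto elim: dvdE)
  define k where "k = t div 2"
  have tk: "t = 2 * k" using m unfolding k_def by presburger
  have e1: "(w + k) = 2 * m" using m tk by simp
  have e2: "(w - k) = 2 * (m - k)" using m tk by simp
  define u where "u = m"
  define v where "v = m - k"
  define p where "p = nat u"
  define s where "s = nat (- u)"
  define q where "q = nat v"
  define r where "r = nat (- v)"
  have ps: "int p - int s = u" unfolding p_def s_def by simp
  have qr: "int q - int r = v" unfolding q_def r_def by simp
  define f where "f = Seq (iter (curlR True) p) (Seq (iter (curlL True) q)
      (Seq (iter (curlR False) r) (iter (curlL False) s)))"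
  have A: "dtyp (iter (curlR True) p) [Up] [Up] \<and> writhe (iter (curlR True) p) = int p
    \<and> turning (iter (curlR True) p) = 2 * int p \<and> tangle_eq True [Up] [Up] (iter (curlR True) p) (Id [Up])"
    using iter_props[of "curlR True" p] curlR_props[of True] by simp
  have B: "dtyp (iter (curlL True) q) [Up] [Up] \<and> writhe (iter (curlL True) q) = int q
    \<and> turning (iter (curlL True) q) = - 2 * int q \<and> tangle_eq True [Up] [Up] (iter (curlL True) q) (Id [Up])"
    using iter_props[of "curlL True" q] curlL_props[of True] by simp
  have C: "dtyp (iter (curlR False) r) [Up] [Up] \<and> writhe (iter (curlR False) r) = - int r
    \<and> turning (iter (curlR False) r) = 2 * int r \<and> tangle_eq True [Up] [Up] (iter (curlR False) r) (Id [Up])"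
    using iter_props[of "curlR False" r] curlR_props[of False] by simp
  have D: "dtyp (iter (curlL False) s) [Up] [Up] \<and> writhe (iter (curlL False) s) = - int s
    \<and> turning (iter (curlL False) s) = - 2 * int s \<and> tangle_eq True [Up] [Up] (iter (curlL False) s) (Id [Up])"
    using iter_props[of "curlL False" s] curlL_props[of False] by simp
  have F: "dtyp f [Up] [Up] \<and> tangle_eq True [Up] [Up] f (Id [Up])"
    unfolding f_def using four_props A B C D by blast
  have "writhe f = int p + int q - int r - int s" unfolding f_def using A B C D by simp
  also have "\<dots> = w" using ps qr e1 e2 unfolding u_def v_def by linarith
  finally have W: "writhe f = w" .
  have "turning f = 2 * (int p - int q + int r - int s)" unfolding f_def using A B C D by simp
  also have "\<dots> = t" using ps qr e1 e2 tk unfolding u_def v_def by (simp add: algebra_simps)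
  finally have T: "turning f = t" .
  show ?thesis using F W T by blast
qed

end
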